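(* In a $\kappa_G$-NMPG with softmax policies, for every agent $i$, every integer $\kappa\le\kappa_G$, and all parameters $\theta=(\theta_{N_i^\kappa},\theta_{-N_i^\kappa})$, $\theta'=(\theta'_{N_i^\kappa},\theta_{-N_i^\kappa})$ that agree outside $N_i^\kappa$, $$\left\|\nabla_{\theta_{N_i^\kappa}}\Phi_i(\theta)-\nabla_{\theta_{N_i^\kappa}}\Phi_i(\theta')\right\|\le L(\kappa)\left\|\theta_{N_i^\kappa}-\theta'_{N_i^\kappa}\right\|,\qquad L(\kappa)=\frac{6n(\kappa)}{(1-\gamma)^3}.$$
   Context: Networked Markov game. There are $n$ agents $\mathcal N=\{1,\dots,n\}$ placed at the nodes of an undirected graph $\mathcal G=(\mathcal N,\mathcal E)$ with graph distance $\mathrm{dist}$. For an integer $\kappa\ge0$, $N_i^\kappa=\{j\in\mathcal N:\mathrm{dist}(i,j)\le\kappa\}$ (so $i\in N_i^\kappa$), $\mathcal N_i=N_i^1$, $-N_i^\kappa=\mathcal N\setminus N_i^\kappa$, and $n(\kappa)=\max_i|N_i^\kappa|$. Agent $i$ has a finite local state space $\mathcal S_i$ and a finite local action space $\mathcal A_i$; $\mathcal S=\prod_i\mathcal S_i$, $\mathcal A=\prod_i\mathcal A_i$, and for $I\subseteq\mathcal N$ we write $s_I,a_I,\mathcal S_I,\mathcal A_I$ for the joint states/actions/spaces of the agents in $I$ (the subscript $-i$ means $\mathcal N\setminus\{i\}$). The dynamics are $\mathcal P(s'\mid s,a)=\prod_i\mathcal P_i(s_i'\mid s_{\mathcal N_i},a_i)$,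 the initial distribution is $\mu\in\Delta(\mathcal S)$, and $\gamma\in(0,1)$ is a discount factor. Each agent has a reward $r_i:\mathcal S\times\mathcal A\to[0,1]$ depending only on $(s_{N_i^{\kappa_r}},a_{N_i^{\kappa_r}})$ for a fixed integer $\kappa_r\ge0$. A local policy of agent $i$ is a map $\xi_i:\mathcal S_i\to\Delta(\mathcal A_i)$; $\Xi_i$ is the set of them, $\Xi_I=\prod_{i\in I}\Xi_i$, $\Xi=\Xi_{\mathcal N}$, and a joint policy $\xi=(\xi_1,\dots,\xi_n)$ acts by $\xi(a\mid s)=\prod_i\xi_i(a_i\mid s_i)$. $J_i(\xi)=\sum_{t\ge0}\gamma^t\mathbb E_\xi[r_i(s(t),a(t))]$ with $s(0)\sim\mu$. Softmax policies: for $\theta_i\in\mathbb R^{|\mathcal S_i||\mathcal A_i|}$, $\xi_i^{\theta_i}(a_i\mid s_i)=\exp(\theta_{i,s_i,a_i})/\sum_{a_i'\in\mathcal A_i}\exp(\theta_{i,s_i,a_i'})$; $\theta=(\theta_1,\dots,\theta_n)$, $\xi^\theta=(\xi_1^{\theta_1},\dots,\xi_n^{\theta_n})$, and we write $J_i(\theta)$ for $J_i(\xi^\theta)$. Norms $\|\cdot\|$ are Euclidean. NMPG: for an integer $\kappa_G\ge0$, the game is a $\kappa_G$-networked Markov potential game ($\kappa_G$-NMPG) if there are functions $\Phi_i:\Xi\to\mathbb R$, $i\in\mathcal N$ (local potentials), such that for every $i\in\mathcal N$, $j\in N_i^{\kappa_G}$, $\xi_j,\xi_j'\in\Xi_j$,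 $\xi_{-j}\in\Xi_{-j}$: $J_j(\xi_j',\xi_{-j})-J_j(\xi_j,\xi_{-j})=\Phi_i(\xi_j',\xi_{-j})-\Phi_i(\xi_j,\xi_{-j})$. We write $\Phi_i(\theta)$ for $\Phi_i(\xi^\theta)$. *)

theory Defs
  imports "HOL-Analysis.Analysis"
begin

(* Graph: agents are the elements of the finite type 'n; E is a symmetric irreflexive edge relation. *)
definition undirected_graph :: "('n \<Rightarrow> 'n \<Rightarrow> bool) \<Rightarrow> bool" where
  "undirected_graph E \<longleftrightarrow> (\<forall>i j. E i j \<longrightarrow> E j i) \<and> (\<forall>i. \<not> E i i)"

(* walk E i ps j : i, ps!0, ..., j is a walk with length ps edges *)
fun walk :: "('n \<Rightarrow> 'n \<Rightarrow> bool) \<Rightarrow> 'n \<Rightarrow> 'n list \<Rightarrow> 'n \<Rightarrow> bool" where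
  "walk E i [] j = (i = j)"
| "walk E i (x # xs) j = (E i x \<and> walk E x xs j)"

definition nbhd :: "('n \<Rightarrow> 'n \<Rightarrow> bool) \<Rightarrow> nat \<Rightarrow> 'n \<Rightarrow> 'n set" where
  "nbhd E k i = {j. \<exists>ps. length ps \<le> k \<and> walk E i ps j}"

definition nk :: "('n::finite \<Rightarrow> 'n \<Rightarrow> bool) \<Rightarrow> nat \<Rightarrow> nat" where
  "nk E k = Max (range (\<lambda>i. card (nbhd E k i)))"

definition jspace :: "('n \<Rightarrow> 'x set) \<Rightarrow> ('n \<Rightarrow> 'x) set" where
  "jspace X = {x. \<forall>i. x i \<in> X i}"

(* local policies: xi i s a = probability of action a in local state s; extensional (zero off carriers) *)
definition local_policy :: "'s set \<Rightarrow> 'a set \<Rightarrow> ('s \<Rightarrow> 'a \<Rightarrow> real) \<Rightarrow> bool" where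
  "local_policy Si Ai p \<longleftrightarrow>
     (\<forall>s a. (s \<notin> Si \<or> a \<notin> Ai) \<longrightarrow> p s a = 0) \<and>
     (\<forall>s\<in>Si. (\<forall>a\<in>Ai. 0 \<le> p s a) \<and> (\<Sum>a\<in>Ai. p s a) = 1)"

definition policies :: "('n \<Rightarrow> 's set) \<Rightarrow> ('n \<Rightarrow> 'a set) \<Rightarrow> ('n \<Rightarrow> 's \<Rightarrow> 'a \<Rightarrow> real) set" where
  "policies S A = {xi. \<forall>i. local_policy (S i) (A i) (xi i)}"

definition joint_pol :: "('n::finite \<Rightarrow> 's \<Rightarrow> 'a \<Rightarrow> real) \<Rightarrow> ('n \<Rightarrow> 's) \<Rightarrow> ('n \<Rightarrow> 'a) \<Rightarrow> real" where
  "joint_pol xi s a = (\<Prod>i\<in>UNIV. xi i (s i) (a i))"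

(* P(s'|s,a) = prod_i P_i(s'_i | s, a_i) ; P_i is assumed to depend on s only through s_{N_i} *)
definition joint_trans :: "('n::finite \<Rightarrow> ('n \<Rightarrow> 's) \<Rightarrow> 'a \<Rightarrow> 's \<Rightarrow> real) \<Rightarrow> ('n \<Rightarrow> 's) \<Rightarrow> ('n \<Rightarrow> 'a) \<Rightarrow> ('n \<Rightarrow> 's) \<Rightarrow> real" where
  "joint_trans P s a s' = (\<Prod>i\<in>UNIV. P i s (a i) (s' i))"

primrec state_dist ::
  "('n::finite \<Rightarrow> 's set) \<Rightarrow> ('n \<Rightarrow> 'a set) \<Rightarrow> ('n \<Rightarrow> ('n \<Rightarrow> 's) \<Rightarrow> 'a \<Rightarrow> 's \<Rightarrow> real) \<Rightarrow>
   (('n \<Rightarrow> 's) \<Rightarrow> real) \<Rightarrow> ('n \<Rightarrow> 's \<Rightarrow> 'a \<Rightarrow> real) \<Rightarrow> nat \<Rightarrow> ('n \<Rightarrow> 's) \<Rightarrow> real" where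
  "state_dist S A P mu xi 0 = mu"
| "state_dist S A P mu xi (Suc t) = (\<lambda>s'. \<Sum>s\<in>jspace S. \<Sum>a\<in>jspace A.
      state_dist S A P mu xi t s * joint_pol xi s a * joint_trans P s a s')"

definition Jval ::
  "('n::finite \<Rightarrow> 's set) \<Rightarrow> ('n \<Rightarrow> 'a set) \<Rightarrow> ('n \<Rightarrow> ('n \<Rightarrow> 's) \<Rightarrow> 'a \<Rightarrow> 's \<Rightarrow> real) \<Rightarrow>
   (('n \<Rightarrow> 's) \<Rightarrow> real) \<Rightarrow> real \<Rightarrow> ('n \<Rightarrow> ('n \<Rightarrow> 's) \<Rightarrow> ('n \<Rightarrow> 'a) \<Rightarrow> real) \<Rightarrow> 'n \<Rightarrow>
   ('n \<Rightarrow> 's \<Rightarrow> 'a \<Rightarrow> real) \<Rightarrow> real" where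
  "Jval S A P mu \<gamma> r i xi = (\<Sum>t. \<gamma> ^ t * (\<Sum>s\<in>jspace S. \<Sum>a\<in>jspace A.
      state_dist S A P mu xi t s * joint_pol xi s a * r i s a))"

definition softmax :: "('n \<Rightarrow> 's set) \<Rightarrow> ('n \<Rightarrow> 'a set) \<Rightarrow> ('n \<Rightarrow> 's \<Rightarrow> 'a \<Rightarrow> real) \<Rightarrow> 'n \<Rightarrow> 's \<Rightarrow> 'a \<Rightarrow> real" where
  "softmax S A \<theta> i s a =
     (if s \<in> S i \<and> a \<in> A i then exp (\<theta> i s a) / (\<Sum>a'\<in>A i. exp (\<theta> i s a')) else 0)"

definition is_NMPG ::
  "('n::finite \<Rightarrow> 'n \<Rightarrow> bool) \<Rightarrow> nat \<Rightarrow> ('n \<Rightarrow> 's set) \<Rightarrow> ('n \<Rightarrow> 'a set) \<Rightarrow>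
   ('n \<Rightarrow> ('n \<Rightarrow> 's \<Rightarrow> 'a \<Rightarrow> real) \<Rightarrow> real) \<Rightarrow> ('n \<Rightarrow> ('n \<Rightarrow> 's \<Rightarrow> 'a \<Rightarrow> real) \<Rightarrow> real) \<Rightarrow> bool" where
  "is_NMPG E \<kappa>G S A J \<Phi> \<longleftrightarrow>
     (\<forall>i. \<forall>j\<in>nbhd E \<kappa>G i. \<forall>xi\<in>policies S A. \<forall>p. local_policy (S j) (A j) p \<longrightarrow>
        J j (xi(j := p)) - J j xi = \<Phi> i (xi(j := p)) - \<Phi> i xi)"

definition coord_fun :: "(('n \<Rightarrow> 's \<Rightarrow> 'a \<Rightarrow> real) \<Rightarrow> real) \<Rightarrow> ('n \<Rightarrow> 's \<Rightarrow> 'a \<Rightarrow> real) \<Rightarrow> 'n \<Rightarrow> 's \<Rightarrow> 'a \<Rightarrow> real \<Rightarrow> real" where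
  "coord_fun F \<theta> j s a = (\<lambda>x. F (\<theta>(j := (\<theta> j)(s := (\<theta> j s)(a := x)))))"

definition partial :: "(('n \<Rightarrow> 's \<Rightarrow> 'a \<Rightarrow> real) \<Rightarrow> real) \<Rightarrow> ('n \<Rightarrow> 's \<Rightarrow> 'a \<Rightarrow> real) \<Rightarrow> 'n \<Rightarrow> 's \<Rightarrow> 'a \<Rightarrow> real" where
  "partial F \<theta> j s a = deriv (coord_fun F \<theta> j s a) (\<theta> j s a)"

definition block_norm :: "('n \<Rightarrow> 's set) \<Rightarrow> ('n \<Rightarrow> 'a set) \<Rightarrow> 'n set \<Rightarrow> ('n \<Rightarrow> 's \<Rightarrow> 'a \<Rightarrow> real) \<Rightarrow> real" where
  "block_norm S A I v = sqrt (\<Sum>j\<in>I. \<Sum>s\<in>S j. \<Sum>a\<in>A j. (v j s a)\<^sup>2)"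

end

theory Submission
  imports Defs
begin

lemma jspace_PiE: "jspace X = Pi\<^sub>E UNIV X"
  unfolding jspace_def PiE_def Pi_def by auto

lemma sum_jspace_prod:
  fixes f :: "'n::finite \<Rightarrow> 'a \<Rightarrow> real"
  assumes "\<And>l. finite (X l)"
  shows "(\<Sum>a\<in>jspace X. \<Prod>l\<in>UNIV. f l (a l)) = (\<Prod>l\<in>UNIV. \<Sum>b\<in>X l. f l b)"
  unfolding jspace_PiE by (rule prod_sum_PiE[symmetric]) (auto simp: assms)

lemma avg_bound:
  fixes w f :: "'x \<Rightarrow> real"
  assumes "finite X" "\<forall>x\<in>X. 0 \<le> w x" "(\<Sum>x\<in>X. w x) = 1" "\<forall>x\<in>X. \<bar>f x\<bar> \<le> c"
  shows "\<bar>\<Sum>x\<in>X. w x * f x\<bar> \<le> c"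
proof -
  have "\<bar>\<Sum>x\<in>X. w x * f x\<bar> \<le> (\<Sum>x\<in>X. \<bar>w x * f x\<bar>)" by (rule sum_abs)
  also have "\<dots> \<le> (\<Sum>x\<in>X. w x * c)"
    using assms by (intro sum_mono) (auto simp: abs_mult intro: mult_left_mono)
  also have "\<dots> = c" using assms(3) by (simp add: sum_distrib_right[symmetric])
  finally show ?thesis .
qed

lemma abs_mult_le: "\<bar>x::real\<bar> \<le> a \<Longrightarrow> \<bar>y\<bar> \<le> b \<Longrightarrow> \<bar>x * y\<bar> \<le> a * b"
  by (simp add: abs_mult mult_mono')

lemma sq_diff_le: "((x::real) - y)\<^sup>2 \<le> 2 * (x\<^sup>2 + y\<^sup>2)"
proof -
  have "0 \<le> (x + y)\<^sup>2" by simp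
  then show ?thesis by (simp add: power2_eq_square algebra_simps)
qed

lemma geom2_sums:
  assumes "\<bar>z::real\<bar> < 1"
  shows "(\<lambda>n. (real (Suc n) * real (Suc (Suc n))) * z ^ n) sums (2 / (1 - z)^3)"
proof -
  have "(\<lambda>n. diffs (\<lambda>n. real (Suc n)) n * z ^ n) sums (2 / (1 - z)^3)"
  proof (rule termdiffs_sums_strong[where K = 1])
    fix y :: real assume "norm y < 1"
    then show "(\<lambda>n. real (Suc n) * y ^ n) sums (1 / (1 - y)^2)"
      using geometric_deriv_sums[of y] by simp
  next
    have nz: "1 - z \<noteq> 0" using assms by auto
    have "((\<lambda>y. 1 / (1 - y)^2) has_real_derivative
       (0 * (1 - z)^2 - 1 * (of_nat 2 * ((0 - 1) * (1 - z) ^ (2 - Suc 0)))) / ((1 - z)^2 * (1 - z)^2)) (at z)"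
      using nz by (intro DERIV_divide DERIV_power DERIV_diff DERIV_const DERIV_ident) auto
    moreover have "(0 * (1 - z)^2 - 1 * (of_nat 2 * ((0 - 1) * (1 - z) ^ (2 - Suc 0)))) / ((1 - z)^2 * (1 - z)^2)
        = ((1 - z) * 2) / ((1 - z) * (1 - z)^3)"
      by (simp add: power2_eq_square power3_eq_cube algebra_simps)
    moreover have "((1 - z) * 2) / ((1 - z) * (1 - z)^3) = 2 / (1 - z)^3"
      using nz by (rule mult_divide_mult_cancel_left)
    ultimately show "((\<lambda>y. 1 / (1 - y)^2) has_real_derivative 2 / (1 - z)^3) (at z)" by simp
  qed (use assms in auto)
  then show ?thesis unfolding diffs_def by (simp add: mult.commute)
qed

locale game =
  fixes S :: "'n::finite \<Rightarrow> 's::finite set"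
    and A :: "'n \<Rightarrow> 'a::finite set"
    and P :: "'n \<Rightarrow> ('n \<Rightarrow> 's) \<Rightarrow> 'a \<Rightarrow> 's \<Rightarrow> real"
    and mu :: "('n \<Rightarrow> 's) \<Rightarrow> real"
    and \<gamma> :: real
    and r :: "'n \<Rightarrow> ('n \<Rightarrow> 's) \<Rightarrow> ('n \<Rightarrow> 'a) \<Rightarrow> real"
  assumes S_ne: "\<forall>j. S j \<noteq> {}"
    and A_ne: "\<forall>j. A j \<noteq> {}"
    and P_nonneg: "\<forall>j. \<forall>s\<in>jspace S. \<forall>a\<in>A j. \<forall>s'\<in>S j. 0 \<le> P j s a s'"
    and P_sum: "\<forall>j. \<forall>s\<in>jspace S. \<forall>a\<in>A j. (\<Sum>s'\<in>S j. P j s a s') = 1"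
    and mu_nonneg: "\<forall>s\<in>jspace S. 0 \<le> mu s"
    and mu_sum: "(\<Sum>s\<in>jspace S. mu s) = 1"
    and gamma: "0 < \<gamma>" "\<gamma> < 1"
    and r_range: "\<forall>j. \<forall>s\<in>jspace S. \<forall>a\<in>jspace A. 0 \<le> r j s a \<and> r j s a \<le> 1"
begin

abbreviation "jS \<equiv> jspace S"
abbreviation "jA \<equiv> jspace A"

definition KV :: "('n \<Rightarrow> 's) \<Rightarrow> ('n \<Rightarrow> 'a) \<Rightarrow> (('n \<Rightarrow> 's) \<Rightarrow> real) \<Rightarrow> real" where
  "KV s a V = (\<Sum>s'\<in>jS. joint_trans P s a s' * V s')"

primrec Vf :: "('n \<Rightarrow> 's \<Rightarrow> 'a \<Rightarrow> real) \<Rightarrow> 'n \<Rightarrow> nat \<Rightarrow> ('n \<Rightarrow> 's) \<Rightarrow> real" where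
  "Vf \<xi> j 0 s = (\<Sum>a\<in>jA. joint_pol \<xi> s a * r j s a)"
| "Vf \<xi> j (Suc k) s = (\<Sum>a\<in>jA. joint_pol \<xi> s a * KV s a (Vf \<xi> j k))"

definition ls :: "('n \<Rightarrow> 's \<Rightarrow> 'a \<Rightarrow> real) \<Rightarrow> ('n \<Rightarrow> 's \<Rightarrow> 'a \<Rightarrow> real) \<Rightarrow> 'n \<Rightarrow> 's \<Rightarrow> 'a \<Rightarrow> real" where
  "ls \<xi> u l sl b = u l sl b - (\<Sum>c\<in>A l. \<xi> l sl c * u l sl c)"

definition sc :: "('n \<Rightarrow> 's \<Rightarrow> 'a \<Rightarrow> real) \<Rightarrow> ('n \<Rightarrow> 's \<Rightarrow> 'a \<Rightarrow> real) \<Rightarrow> ('n \<Rightarrow> 's) \<Rightarrow> ('n \<Rightarrow> 'a) \<Rightarrow> real" where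
  "sc \<xi> u s a = (\<Sum>l\<in>UNIV. ls \<xi> u l (s l) (a l))"

definition dsc :: "('n \<Rightarrow> 's \<Rightarrow> 'a \<Rightarrow> real) \<Rightarrow> ('n \<Rightarrow> 's \<Rightarrow> 'a \<Rightarrow> real) \<Rightarrow> ('n \<Rightarrow> 's \<Rightarrow> 'a \<Rightarrow> real) \<Rightarrow> ('n \<Rightarrow> 's) \<Rightarrow> ('n \<Rightarrow> 'a) \<Rightarrow> real" where
  "dsc \<xi> u w s a = - (\<Sum>l\<in>UNIV. \<Sum>b\<in>A l. \<xi> l (s l) b * ls \<xi> u l (s l) b * w l (s l) b)"

primrec Uf :: "('n \<Rightarrow> 's \<Rightarrow> 'a \<Rightarrow> real) \<Rightarrow> ('n \<Rightarrow> 's \<Rightarrow> 'a \<Rightarrow> real) \<Rightarrow> 'n \<Rightarrow> nat \<Rightarrow> ('n \<Rightarrow> 's) \<Rightarrow> real" where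
  "Uf \<xi> u j 0 s = (\<Sum>a\<in>jA. joint_pol \<xi> s a * (sc \<xi> u s a * r j s a))"
| "Uf \<xi> u j (Suc k) s = (\<Sum>a\<in>jA. joint_pol \<xi> s a *
      (sc \<xi> u s a * KV s a (Vf \<xi> j k) + KV s a (Uf \<xi> u j k)))"

primrec U2 :: "('n \<Rightarrow> 's \<Rightarrow> 'a \<Rightarrow> real) \<Rightarrow> ('n \<Rightarrow> 's \<Rightarrow> 'a \<Rightarrow> real) \<Rightarrow> ('n \<Rightarrow> 's \<Rightarrow> 'a \<Rightarrow> real) \<Rightarrow> 'n \<Rightarrow> nat \<Rightarrow> ('n \<Rightarrow> 's) \<Rightarrow> real" where
  "U2 \<xi> u w j 0 s = (\<Sum>a\<in>jA. joint_pol \<xi> s a * ((sc \<xi> u s a * sc \<xi> w s a + dsc \<xi> u w s a) * r j s a))"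
| "U2 \<xi> u w j (Suc k) s = (\<Sum>a\<in>jA. joint_pol \<xi> s a *
      ((sc \<xi> u s a * sc \<xi> w s a + dsc \<xi> u w s a) * KV s a (Vf \<xi> j k)
       + sc \<xi> w s a * KV s a (Uf \<xi> u j k) + sc \<xi> u s a * KV s a (Uf \<xi> w j k)
       + KV s a (U2 \<xi> u w j k)))"

lemma jt_nonneg: "s \<in> jS \<Longrightarrow> a \<in> jA \<Longrightarrow> s' \<in> jS \<Longrightarrow> 0 \<le> joint_trans P s a s'"
  unfolding joint_trans_def using P_nonneg by (intro prod_nonneg) (auto simp: jspace_def)

lemma jt_sum: "s \<in> jS \<Longrightarrow> a \<in> jA \<Longrightarrow> (\<Sum>s'\<in>jS. joint_trans P s a s') = 1"
  unfolding joint_trans_def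
  by (subst sum_jspace_prod[where f = "\<lambda>l b. P l s (a l) b"]) (use P_sum in \<open>auto simp: jspace_def\<close>)

lemma KV_bound: "s \<in> jS \<Longrightarrow> a \<in> jA \<Longrightarrow> \<forall>s'\<in>jS. \<bar>V s'\<bar> \<le> c \<Longrightarrow> \<bar>KV s a V\<bar> \<le> c"
  unfolding KV_def by (rule avg_bound) (auto simp: jt_nonneg jt_sum)

definition pol :: "('n \<Rightarrow> 's \<Rightarrow> 'a \<Rightarrow> real) \<Rightarrow> bool" where
  "pol \<xi> \<longleftrightarrow> (\<forall>l. \<forall>s\<in>S l. (\<forall>a\<in>A l. 0 \<le> \<xi> l s a) \<and> (\<Sum>a\<in>A l. \<xi> l s a) = 1)"

lemma jp_nonneg: "pol \<xi> \<Longrightarrow> s \<in> jS \<Longrightarrow> a \<in> jA \<Longrightarrow> 0 \<le> joint_pol \<xi> s a"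
  unfolding joint_pol_def pol_def by (intro prod_nonneg) (auto simp: jspace_def)

lemma jp_sum: "pol \<xi> \<Longrightarrow> s \<in> jS \<Longrightarrow> (\<Sum>a\<in>jA. joint_pol \<xi> s a) = 1"
  unfolding joint_pol_def
  by (subst sum_jspace_prod[where f = "\<lambda>l b. \<xi> l (s l) b"]) (auto simp: jspace_def pol_def)

lemma jp_avg: "pol \<xi> \<Longrightarrow> s \<in> jS \<Longrightarrow> \<forall>a\<in>jA. \<bar>f a\<bar> \<le> c \<Longrightarrow> \<bar>\<Sum>a\<in>jA. joint_pol \<xi> s a * f a\<bar> \<le> c"
  by (rule avg_bound) (auto simp: jp_nonneg jp_sum)

lemma Vf_bound: "pol \<xi> \<Longrightarrow> s \<in> jS \<Longrightarrow> \<bar>Vf \<xi> j k s\<bar> \<le> 1"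
proof (induction k arbitrary: s)
  case 0
  then show ?case using r_range by (auto intro!: jp_avg)
next
  case (Suc k)
  then show ?case by (auto intro!: jp_avg KV_bound)
qed

lemma Uf_bound:
  assumes "pol \<xi>" "0 \<le> cu" "\<forall>s\<in>jS. \<forall>a\<in>jA. \<bar>sc \<xi> u s a\<bar> \<le> cu"
  shows "s \<in> jS \<Longrightarrow> \<bar>Uf \<xi> u j k s\<bar> \<le> (k+1) * cu"
proof (induction k arbitrary: s)
  case 0
  have "\<bar>sc \<xi> u s a * r j s a\<bar> \<le> cu * 1" if "a \<in> jA" for a
    using that 0 assms r_range by (intro abs_mult_le) auto
  then show ?case using 0 assms by (auto intro!: jp_avg)
next
  case (Suc k)
  have "\<bar>sc \<xi> u s a * KV s a (Vf \<xi> j k) + KV s a (Uf \<xi> u j k)\<bar> \<le> cu * 1 + (k+1) * cu"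
    if "a \<in> jA" for a
  proof -
    have "\<bar>sc \<xi> u s a * KV s a (Vf \<xi> j k)\<bar> \<le> cu * 1"
      using that Suc assms by (intro abs_mult_le KV_bound) (auto simp: Vf_bound)
    moreover have "\<bar>KV s a (Uf \<xi> u j k)\<bar> \<le> (k+1) * cu"
      using that Suc by (intro KV_bound) (auto simp: add.commute)
    ultimately show ?thesis by linarith
  qed
  then have "\<bar>\<Sum>a\<in>jA. joint_pol \<xi> s a * (sc \<xi> u s a * KV s a (Vf \<xi> j k) + KV s a (Uf \<xi> u j k))\<bar> \<le> cu * 1 + (k+1) * cu"
    using Suc assms by (intro jp_avg) auto
  then show ?case by (simp add: algebra_simps)
qed

lemma U2_bound:
  assumes "pol \<xi>" "0 \<le> cu" "0 \<le> cw" "0 \<le> cd"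
    "\<forall>s\<in>jS. \<forall>a\<in>jA. \<bar>sc \<xi> u s a\<bar> \<le> cu"
    "\<forall>s\<in>jS. \<forall>a\<in>jA. \<bar>sc \<xi> w s a\<bar> \<le> cw"
    "\<forall>s\<in>jS. \<forall>a\<in>jA. \<bar>dsc \<xi> u w s a\<bar> \<le> cd"
  shows "s \<in> jS \<Longrightarrow> \<bar>U2 \<xi> u w j k s\<bar> \<le> (k+1)^2 * (cu * cw) + (k+1) * cd"
proof (induction k arbitrary: s)
  case 0
  have "\<bar>(sc \<xi> u s a * sc \<xi> w s a + dsc \<xi> u w s a) * r j s a\<bar> \<le> (cu * cw + cd) * 1" if "a \<in> jA" for a
  proof (rule abs_mult_le)
    have "\<bar>sc \<xi> u s a * sc \<xi> w s a\<bar> \<le> cu * cw" using that 0 assms by (intro abs_mult_le) auto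
    moreover have "\<bar>dsc \<xi> u w s a\<bar> \<le> cd" using that 0 assms by auto
    ultimately show "\<bar>sc \<xi> u s a * sc \<xi> w s a + dsc \<xi> u w s a\<bar> \<le> cu * cw + cd" by linarith
  qed (use that 0 r_range in auto)
  then show ?case using 0 assms by (auto intro!: jp_avg)
next
  case (Suc k)
  let ?X = "\<lambda>a. (sc \<xi> u s a * sc \<xi> w s a + dsc \<xi> u w s a) * KV s a (Vf \<xi> j k)
       + sc \<xi> w s a * KV s a (Uf \<xi> u j k) + sc \<xi> u s a * KV s a (Uf \<xi> w j k)
       + KV s a (U2 \<xi> u w j k)"
  have "\<bar>?X a\<bar> \<le> (k+2)^2 * (cu * cw) + (k+2) * cd" if a: "a \<in> jA" for a
  proof -
    have h1: "\<bar>(sc \<xi> u s a * sc \<xi> w s a + dsc \<xi> u w s a) * KV s a (Vf \<xi> j k)\<bar> \<le> (cu * cw + cd) * 1"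
    proof (rule abs_mult_le)
      have "\<bar>sc \<xi> u s a * sc \<xi> w s a\<bar> \<le> cu * cw" using a Suc assms by (intro abs_mult_le) auto
      moreover have "\<bar>dsc \<xi> u w s a\<bar> \<le> cd" using a Suc assms by auto
      ultimately show "\<bar>sc \<xi> u s a * sc \<xi> w s a + dsc \<xi> u w s a\<bar> \<le> cu * cw + cd" by linarith
    qed (use a Suc assms in \<open>auto intro!: KV_bound simp: Vf_bound\<close>)
    have h2: "\<bar>sc \<xi> w s a * KV s a (Uf \<xi> u j k)\<bar> \<le> cw * ((k+1) * cu)"
      using a Suc assms Uf_bound[OF assms(1,2,5)] Uf_bound[OF assms(1,3,6)] by (intro abs_mult_le KV_bound) (auto simp: add.commute)
    have h3: "\<bar>sc \<xi> u s a * KV s a (Uf \<xi> w j k)\<bar> \<le> cu * ((k+1) * cw)"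
      using a Suc assms Uf_bound[OF assms(1,2,5)] Uf_bound[OF assms(1,3,6)] by (intro abs_mult_le KV_bound) (auto simp: add.commute)
    have h4: "\<bar>KV s a (U2 \<xi> u w j k)\<bar> \<le> (k+1)^2 * (cu * cw) + (k+1) * cd"
      using a Suc by (intro KV_bound) (auto simp: add.commute)
    have "\<bar>?X a\<bar> \<le> (cu * cw + cd) * 1 + cw * ((k+1) * cu) + cu * ((k+1) * cw)
        + ((k+1)^2 * (cu * cw) + (k+1) * cd)"
      using h1 h2 h3 h4 by linarith
    also have "\<dots> = (k+2)^2 * (cu * cw) + (k+2) * cd" by (simp add: power2_eq_square algebra_simps)
    finally show ?thesis .
  qed
  then have "\<bar>\<Sum>a\<in>jA. joint_pol \<xi> s a * ?X a\<bar> \<le> (k+2)^2 * (cu * cw) + (k+2) * cd"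
    using Suc assms by (intro jp_avg) auto
  then show ?case by (simp add: algebra_simps)
qed

lemma DERIV_prod_rel:
  fixes f :: "'i \<Rightarrow> real \<Rightarrow> real"
  assumes "finite L" "\<And>l. l \<in> L \<Longrightarrow> ((\<lambda>x. f l x) has_real_derivative f l x0 * g l) (at x0)"
  shows "((\<lambda>x. \<Prod>l\<in>L. f l x) has_real_derivative (\<Prod>l\<in>L. f l x0) * (\<Sum>l\<in>L. g l)) (at x0)"
  using assms
proof (induction L rule: finite_induct)
  case empty
  then show ?case by simp
next
  case (insert m L)
  have "((\<lambda>x. f m x * (\<Prod>l\<in>L. f l x)) has_real_derivative
          f m x0 * ((\<Prod>l\<in>L. f l x0) * (\<Sum>l\<in>L. g l)) + f m x0 * g m * (\<Prod>l\<in>L. f l x0)) (at x0)"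
    using insert by (intro DERIV_mult') auto
  then show ?case using insert by (simp add: algebra_simps)
qed

definition pf :: "('n \<Rightarrow> 's \<Rightarrow> 'a \<Rightarrow> real) \<Rightarrow> ('n \<Rightarrow> 's \<Rightarrow> 'a \<Rightarrow> real) \<Rightarrow> real \<Rightarrow> ('n \<Rightarrow> 's \<Rightarrow> 'a \<Rightarrow> real)" where
  "pf \<theta> u x = softmax S A (\<lambda>l s a. \<theta> l s a + x * u l s a)"

lemma Z_pos: "0 < (\<Sum>b\<in>A l. exp (f b :: real))"
  using A_ne by (intro sum_pos) auto

lemma pol_softmax: "pol (softmax S A \<eta>)"
  unfolding pol_def softmax_def
  by (auto simp: sum_divide_distrib[symmetric] Z_pos[THEN less_imp_neq, symmetric]
       intro!: divide_nonneg_pos Z_pos)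

lemma pol_pf: "pol (pf \<theta> u x)"
  unfolding pf_def by (rule pol_softmax)

lemma pf_deriv:
  assumes "s \<in> S l" "a \<in> A l"
  shows "((\<lambda>x. pf \<theta> u x l s a) has_real_derivative pf \<theta> u x l s a * ls (pf \<theta> u x) u l s a) (at x)"
proof -
  define E where "E = (\<lambda>x b. exp (\<theta> l s b + x * u l s b))"
  define Z where "Z = (\<lambda>x. \<Sum>b\<in>A l. E x b)"
  have Zp: "Z y > 0" for y unfolding Z_def E_def by (rule Z_pos)
  have pfE: "pf \<theta> u y l s c = E y c / Z y" if "c \<in> A l" for y c
    using that assms unfolding pf_def softmax_def E_def Z_def by auto
  have dE: "((\<lambda>x. E x b) has_real_derivative E x b * u l s b) (at x)" for b
    unfolding E_def by (auto intro!: derivative_eq_intros)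
  have dZ: "(Z has_real_derivative (\<Sum>b\<in>A l. E x b * u l s b)) (at x)"
    unfolding Z_def by (intro DERIV_sum dE)
  have "((\<lambda>x. E x a / Z x) has_real_derivative
          (E x a * u l s a * Z x - E x a * (\<Sum>b\<in>A l. E x b * u l s b)) / (Z x * Z x)) (at x)"
    using Zp[of x] by (intro DERIV_divide dE dZ) auto
  moreover have "(E x a * u l s a * Z x - E x a * (\<Sum>b\<in>A l. E x b * u l s b)) / (Z x * Z x)
      = E x a / Z x * (u l s a - (\<Sum>c\<in>A l. E x c / Z x * u l s c))"
    using Zp[of x] by (simp add: field_simps sum_divide_distrib[symmetric] sum_distrib_left sum_distrib_right)
  moreover have "(\<Sum>c\<in>A l. E x c / Z x * u l s c) = (\<Sum>c\<in>A l. pf \<theta> u x l s c * u l s c)"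
    by (rule sum.cong) (auto simp: pfE)
  moreover have "(\<lambda>x. pf \<theta> u x l s a) = (\<lambda>x. E x a / Z x)" using pfE assms by auto
  ultimately show ?thesis
    using assms by (simp add: ls_def pfE)
qed

lemma jp_deriv:
  assumes "s \<in> jS" "a \<in> jA"
  shows "((\<lambda>x. joint_pol (pf \<theta> u x) s a) has_real_derivative
           joint_pol (pf \<theta> u x) s a * sc (pf \<theta> u x) u s a) (at x)"
  unfolding joint_pol_def sc_def
  by (rule DERIV_prod_rel) (use assms in \<open>auto simp: jspace_def intro!: pf_deriv\<close>)

lemma sc_deriv:
  assumes "s \<in> jS" "a \<in> jA"
  shows "((\<lambda>x. sc (pf \<theta> u x) w s a) has_real_derivative dsc (pf \<theta> u x) u w s a) (at x)"
proof -
  have "((\<lambda>x. \<Sum>l\<in>UNIV. w l (s l) (a l) - (\<Sum>c\<in>A l. pf \<theta> u x l (s l) c * w l (s l) c))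
     has_real_derivative (\<Sum>l\<in>UNIV. 0 - (\<Sum>c\<in>A l. pf \<theta> u x l (s l) c * ls (pf \<theta> u x) u l (s l) c * w l (s l) c))) (at x)"
    using assms by (intro DERIV_sum DERIV_diff DERIV_const DERIV_cmult_right pf_deriv) (auto simp: jspace_def)
  then show ?thesis by (simp add: sc_def ls_def dsc_def sum_negf)
qed

lemma KV_deriv:
  assumes "\<And>s'. s' \<in> jS \<Longrightarrow> ((\<lambda>x. V x s') has_real_derivative V' s') (at x)"
  shows "((\<lambda>x. KV s a (V x)) has_real_derivative KV s a V') (at x)"
  unfolding KV_def by (intro DERIV_sum DERIV_cmult assms)

lemma Vf_deriv:
  "s \<in> jS \<Longrightarrow> ((\<lambda>x. Vf (pf \<theta> u x) j k s) has_real_derivative Uf (pf \<theta> u x) u j k s) (at x)"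
proof (induction k arbitrary: s)
  case 0
  have "((\<lambda>x. \<Sum>a\<in>jA. joint_pol (pf \<theta> u x) s a * r j s a) has_real_derivative
          (\<Sum>a\<in>jA. joint_pol (pf \<theta> u x) s a * sc (pf \<theta> u x) u s a * r j s a)) (at x)"
    using 0 by (intro DERIV_sum DERIV_cmult_right jp_deriv) auto
  then show ?case by (simp add: mult.assoc)
next
  case (Suc k)
  have "((\<lambda>x. \<Sum>a\<in>jA. joint_pol (pf \<theta> u x) s a * KV s a (Vf (pf \<theta> u x) j k)) has_real_derivative
          (\<Sum>a\<in>jA. joint_pol (pf \<theta> u x) s a * KV s a (Uf (pf \<theta> u x) u j k)
             + joint_pol (pf \<theta> u x) s a * sc (pf \<theta> u x) u s a * KV s a (Vf (pf \<theta> u x) j k))) (at x)"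
    using Suc by (intro DERIV_sum DERIV_mult' jp_deriv KV_deriv) auto
  then show ?case by (simp add: algebra_simps)
qed

lemma Uf_deriv:
  "s \<in> jS \<Longrightarrow> ((\<lambda>x. Uf (pf \<theta> u x) w j k s) has_real_derivative U2 (pf \<theta> u x) u w j k s) (at x)"
proof (induction k arbitrary: s)
  case 0
  have "((\<lambda>x. \<Sum>a\<in>jA. joint_pol (pf \<theta> u x) s a * (sc (pf \<theta> u x) w s a * r j s a)) has_real_derivative
          (\<Sum>a\<in>jA. joint_pol (pf \<theta> u x) s a * (dsc (pf \<theta> u x) u w s a * r j s a)
           + joint_pol (pf \<theta> u x) s a * sc (pf \<theta> u x) u s a * (sc (pf \<theta> u x) w s a * r j s a))) (at x)"
    using 0 by (intro DERIV_sum DERIV_mult' DERIV_cmult_right jp_deriv sc_deriv) auto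
  then show ?case by (simp add: algebra_simps sum.distrib)
next
  case (Suc k)
  let ?p = "pf \<theta> u x"
  have "((\<lambda>x. \<Sum>a\<in>jA. joint_pol (pf \<theta> u x) s a *
           (sc (pf \<theta> u x) w s a * KV s a (Vf (pf \<theta> u x) j k) + KV s a (Uf (pf \<theta> u x) w j k)))
        has_real_derivative
          (\<Sum>a\<in>jA. joint_pol ?p s a *
             ((sc ?p w s a * KV s a (Uf ?p u j k) + dsc ?p u w s a * KV s a (Vf ?p j k)) + KV s a (U2 ?p u w j k))
           + joint_pol ?p s a * sc ?p u s a * (sc ?p w s a * KV s a (Vf ?p j k) + KV s a (Uf ?p w j k)))) (at x)"
    using Suc by (intro DERIV_sum DERIV_mult' DERIV_add jp_deriv sc_deriv KV_deriv Vf_deriv) auto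
  then show ?case by (simp add: algebra_simps sum.distrib)
qed

definition Nl :: "('n \<Rightarrow> 's \<Rightarrow> 'a \<Rightarrow> real) \<Rightarrow> 'n \<Rightarrow> real" where
  "Nl u l = sqrt (\<Sum>s\<in>S l. \<Sum>b\<in>A l. (u l s b)\<^sup>2)"

lemma Nl_nonneg: "0 \<le> Nl u l"
  unfolding Nl_def by (auto intro!: sum_nonneg)

lemma entry_le_Nl: "sl \<in> S l \<Longrightarrow> b \<in> A l \<Longrightarrow> \<bar>u l sl b\<bar> \<le> Nl u l"
proof -
  assume h: "sl \<in> S l" "b \<in> A l"
  have "(u l sl b)\<^sup>2 \<le> (\<Sum>b\<in>A l. (u l sl b)\<^sup>2)"
    using h by (intro member_le_sum) auto
  also have "\<dots> \<le> (\<Sum>s\<in>S l. \<Sum>b\<in>A l. (u l s b)\<^sup>2)"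
    using h by (intro member_le_sum[where f = "\<lambda>s. \<Sum>b\<in>A l. (u l s b)\<^sup>2"]) (auto intro!: sum_nonneg)
  finally show ?thesis unfolding Nl_def by (metis real_sqrt_abs real_sqrt_le_mono)
qed

lemma diff_le_Nl: "sl \<in> S l \<Longrightarrow> a \<in> A l \<Longrightarrow> c \<in> A l \<Longrightarrow> \<bar>u l sl a - u l sl c\<bar> \<le> sqrt 2 * Nl u l"
proof (cases "a = c")
  case True
  then show ?thesis by (simp add: Nl_nonneg)
next
  case False
  assume h: "sl \<in> S l" "a \<in> A l" "c \<in> A l"
  have "(u l sl a)\<^sup>2 + (u l sl c)\<^sup>2 = (\<Sum>b\<in>{a,c}. (u l sl b)\<^sup>2)" using False by simp
  also have "\<dots> \<le> (\<Sum>b\<in>A l. (u l sl b)\<^sup>2)" using h by (intro sum_mono2) auto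
  also have "\<dots> \<le> (\<Sum>s\<in>S l. \<Sum>b\<in>A l. (u l s b)\<^sup>2)"
    using h by (intro member_le_sum[where f = "\<lambda>s. \<Sum>b\<in>A l. (u l s b)\<^sup>2"]) (auto intro!: sum_nonneg)
  finally have 1: "(u l sl a)\<^sup>2 + (u l sl c)\<^sup>2 \<le> (\<Sum>s\<in>S l. \<Sum>b\<in>A l. (u l s b)\<^sup>2)" .
  have "(u l sl a - u l sl c)\<^sup>2 \<le> 2 * ((u l sl a)\<^sup>2 + (u l sl c)\<^sup>2)"
    by (rule sq_diff_le)
  also have "\<dots> \<le> 2 * (\<Sum>s\<in>S l. \<Sum>b\<in>A l. (u l s b)\<^sup>2)" using 1 by simp
  finally have "sqrt ((u l sl a - u l sl c)\<^sup>2) \<le> sqrt (2 * (\<Sum>s\<in>S l. \<Sum>b\<in>A l. (u l s b)\<^sup>2))"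
    by (rule real_sqrt_le_mono)
  then show ?thesis unfolding Nl_def by (simp add: real_sqrt_mult)
qed

lemma ls_alt: "pol \<xi> \<Longrightarrow> sl \<in> S l \<Longrightarrow> ls \<xi> u l sl a = (\<Sum>c\<in>A l. \<xi> l sl c * (u l sl a - u l sl c))"
  unfolding ls_def pol_def by (simp add: right_diff_distrib sum_subtractf sum_distrib_right[symmetric])

lemma ls_bound: "pol \<xi> \<Longrightarrow> sl \<in> S l \<Longrightarrow> a \<in> A l \<Longrightarrow> \<bar>ls \<xi> u l sl a\<bar> \<le> sqrt 2 * Nl u l"
  unfolding ls_alt by (rule avg_bound) (auto simp: pol_def diff_le_Nl)

lemma sc_bound: "pol \<xi> \<Longrightarrow> s \<in> jS \<Longrightarrow> a \<in> jA \<Longrightarrow> \<bar>sc \<xi> u s a\<bar> \<le> sqrt 2 * (\<Sum>l\<in>UNIV. Nl u l)"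
proof -
  assume h: "pol \<xi>" "s \<in> jS" "a \<in> jA"
  have "\<bar>sc \<xi> u s a\<bar> \<le> (\<Sum>l\<in>UNIV. \<bar>ls \<xi> u l (s l) (a l)\<bar>)" unfolding sc_def by (rule sum_abs)
  also have "\<dots> \<le> (\<Sum>l\<in>UNIV. sqrt 2 * Nl u l)"
    using h by (intro sum_mono ls_bound) (auto simp: jspace_def)
  finally show ?thesis by (simp add: sum_distrib_left)
qed

lemma dsc_bound: "pol \<xi> \<Longrightarrow> s \<in> jS \<Longrightarrow> a \<in> jA \<Longrightarrow> \<bar>dsc \<xi> u w s a\<bar> \<le> sqrt 2 * (\<Sum>l\<in>UNIV. Nl u l * Nl w l)"
proof -
  assume h: "pol \<xi>" "s \<in> jS" "a \<in> jA"
  have "\<bar>dsc \<xi> u w s a\<bar> \<le> (\<Sum>l\<in>UNIV. \<bar>\<Sum>b\<in>A l. \<xi> l (s l) b * (ls \<xi> u l (s l) b * w l (s l) b)\<bar>)"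
    unfolding dsc_def by (simp add: mult.assoc sum_abs)
  also have "\<dots> \<le> (\<Sum>l\<in>UNIV. sqrt 2 * Nl u l * Nl w l)"
  proof (intro sum_mono avg_bound ballI)
    fix l b assume b: "b \<in> A l"
    have sl: "s l \<in> S l" using h by (auto simp: jspace_def)
    show "\<bar>ls \<xi> u l (s l) b * w l (s l) b\<bar> \<le> sqrt 2 * Nl u l * Nl w l"
      using ls_bound[OF h(1) sl b] entry_le_Nl[OF sl b] by (intro abs_mult_le) auto
  qed (use h in \<open>auto simp: pol_def jspace_def\<close>)
  finally show ?thesis by (simp add: sum_distrib_left mult.assoc)
qed

lemma dist_V: "(\<Sum>s\<in>jS. state_dist S A P mu \<xi> t s * Vf \<xi> j k s) = (\<Sum>s\<in>jS. mu s * Vf \<xi> j (t + k) s)"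
proof (induction t arbitrary: k)
  case 0
  then show ?case by simp
next
  case (Suc t)
  have "(\<Sum>s'\<in>jS. state_dist S A P mu \<xi> (Suc t) s' * Vf \<xi> j k s')
      = (\<Sum>s'\<in>jS. \<Sum>s\<in>jS. \<Sum>a\<in>jA. state_dist S A P mu \<xi> t s * joint_pol \<xi> s a * joint_trans P s a s' * Vf \<xi> j k s')"
    by (simp add: sum_distrib_right)
  also have "\<dots> = (\<Sum>s\<in>jS. \<Sum>s'\<in>jS. \<Sum>a\<in>jA. state_dist S A P mu \<xi> t s * joint_pol \<xi> s a * joint_trans P s a s' * Vf \<xi> j k s')"
    by (rule sum.swap)
  also have "\<dots> = (\<Sum>s\<in>jS. \<Sum>a\<in>jA. \<Sum>s'\<in>jS. state_dist S A P mu \<xi> t s * joint_pol \<xi> s a * joint_trans P s a s' * Vf \<xi> j k s')"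
    by (intro sum.cong refl sum.swap)
  also have "\<dots> = (\<Sum>s\<in>jS. state_dist S A P mu \<xi> t s * Vf \<xi> j (Suc k) s)"
    by (simp add: KV_def sum_distrib_left mult.assoc)
  also have "\<dots> = (\<Sum>s\<in>jS. mu s * Vf \<xi> j (Suc t + k) s)"
    using Suc[of "Suc k"] by simp
  finally show ?case .
qed

lemma Jval_V: "Jval S A P mu \<gamma> r j \<xi> = (\<Sum>t. \<gamma> ^ t * (\<Sum>s\<in>jS. mu s * Vf \<xi> j t s))"
proof -
  have "(\<Sum>s\<in>jS. \<Sum>a\<in>jA. state_dist S A P mu \<xi> t s * joint_pol \<xi> s a * r j s a)
        = (\<Sum>s\<in>jS. mu s * Vf \<xi> j t s)" for t
    using dist_V[of \<xi> t j 0] by (simp add: sum_distrib_left mult.assoc)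
  then show ?thesis unfolding Jval_def by simp
qed

lemma mu_avg: "\<forall>s\<in>jS. \<bar>f s\<bar> \<le> c \<Longrightarrow> \<bar>\<Sum>s\<in>jS. mu s * f s\<bar> \<le> c"
  by (rule avg_bound) (auto simp: mu_nonneg mu_sum)

definition CU :: "('n \<Rightarrow> 's \<Rightarrow> 'a \<Rightarrow> real) \<Rightarrow> real" where
  "CU u = sqrt 2 * (\<Sum>l\<in>UNIV. Nl u l)"

lemma CU_nonneg: "0 \<le> CU u"
  unfolding CU_def by (auto intro!: mult_nonneg_nonneg sum_nonneg Nl_nonneg)

lemma F'_bound: "pol \<xi> \<Longrightarrow> \<bar>\<Sum>s\<in>jS. mu s * Uf \<xi> u j t s\<bar> \<le> (t+1) * CU u"
  by (intro mu_avg ballI Uf_bound CU_nonneg) (auto simp: CU_def sc_bound)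

lemma summable_geom1: "summable (\<lambda>t. \<gamma> ^ t * ((real t+1) * c))"
proof -
  have "summable (\<lambda>n. real (Suc n) * \<gamma> ^ n)"
    using geometric_deriv_sums[of \<gamma>] gamma by (auto simp: sums_iff)
  then have "summable (\<lambda>n. (real (Suc n) * \<gamma> ^ n) * c)" by (rule summable_mult2)
  then show ?thesis by (simp add: algebra_simps)
qed

lemma J_deriv:
  "((\<lambda>x. Jval S A P mu \<gamma> r j (pf \<theta> u x)) has_real_derivative
      (\<Sum>t. \<gamma> ^ t * (\<Sum>s\<in>jS. mu s * Uf (pf \<theta> u x) u j t s))) (at x)"
  and J_deriv_summable: "summable (\<lambda>t. \<gamma> ^ t * (\<Sum>s\<in>jS. mu s * Uf (pf \<theta> u y) u j t s))"
proof -
  let ?f = "\<lambda>t x. \<gamma> ^ t * (\<Sum>s\<in>jS. mu s * Vf (pf \<theta> u x) j t s)"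
  let ?f' = "\<lambda>t x. \<gamma> ^ t * (\<Sum>s\<in>jS. mu s * Uf (pf \<theta> u x) u j t s)"
  have d: "(?f t has_real_derivative ?f' t x) (at x within UNIV)" for t x
    by (intro DERIV_cmult DERIV_sum Vf_deriv) auto
  have b: "norm (?f' t x) \<le> \<gamma> ^ t * ((t+1) * CU u)" for t x
    using F'_bound[OF pol_pf] gamma by (simp add: abs_mult)
  have uc: "uniformly_convergent_on UNIV (\<lambda>n x. \<Sum>i<n. ?f' i x)"
    by (rule Weierstrass_m_test'[OF b summable_geom1])
  have s0: "summable (\<lambda>n. ?f n 0)"
  proof (rule summable_comparison_test)
    show "\<exists>N. \<forall>n\<ge>N. norm (?f n 0) \<le> \<gamma> ^ n"
      using mu_avg[of "Vf (pf \<theta> u 0) j _" 1] Vf_bound[OF pol_pf] gamma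
      by (auto simp: abs_mult intro!: mult_left_le)
    show "summable (\<lambda>n. \<gamma> ^ n)" using gamma by simp
  qed
  have "((\<lambda>x. \<Sum>n. ?f n x) has_real_derivative (\<Sum>n. ?f' n x)) (at x)"
    by (rule has_field_derivative_series'(2)[OF convex_UNIV d uc _ s0]) auto
  then show "((\<lambda>x. Jval S A P mu \<gamma> r j (pf \<theta> u x)) has_real_derivative (\<Sum>n. ?f' n x)) (at x)"
    by (simp add: Jval_V)
  show "summable (\<lambda>t. ?f' t y)"
    by (rule summable_comparison_test[OF _ summable_geom1]) (use b in auto)
qed

lemma softmax_policies: "softmax S A \<eta> \<in> policies S A"
  using pol_softmax[of \<eta>] unfolding policies_def local_policy_def pol_def
  by (auto simp: softmax_def)

lemma softmax_cong:
  assumes "\<And>l s a. s \<in> S l \<Longrightarrow> a \<in> A l \<Longrightarrow> \<eta> l s a = \<eta>' l s a"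
  shows "softmax S A \<eta> = softmax S A \<eta>'"
proof (intro ext)
  fix l s a
  show "softmax S A \<eta> l s a = softmax S A \<eta>' l s a"
  proof (cases "s \<in> S l \<and> a \<in> A l")
    case True
    then have "(\<Sum>b\<in>A l. exp (\<eta> l s b)) = (\<Sum>b\<in>A l. exp (\<eta>' l s b))"
      using assms by (intro sum.cong) auto
    then show ?thesis using True assms unfolding softmax_def by auto
  qed (auto simp: softmax_def)
qed

lemma softmax_agent: "(\<And>s a. \<eta> l s a = \<eta>' l s a) \<Longrightarrow> softmax S A \<eta> l = softmax S A \<eta>' l"
  by (simp add: softmax_def fun_eq_iff)

definition ec :: "'n \<Rightarrow> 's \<Rightarrow> 'a \<Rightarrow> ('n \<Rightarrow> 's \<Rightarrow> 'a \<Rightarrow> real)" where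
  "ec j s0 a0 = (\<lambda>l s a. if l = j \<and> s = s0 \<and> a = a0 then 1 else 0)"

definition GD :: "('n \<Rightarrow> 's \<Rightarrow> 'a \<Rightarrow> real) \<Rightarrow> 'n \<Rightarrow> 's \<Rightarrow> 'a \<Rightarrow> real" where
  "GD \<theta> j s0 a0 = (\<Sum>t. \<gamma> ^ t * (\<Sum>s\<in>jS. mu s * Uf (softmax S A \<theta>) (ec j s0 a0) j t s))"

lemma GD_sums: "(\<lambda>t. \<gamma> ^ t * (\<Sum>s\<in>jS. mu s * Uf (softmax S A \<theta>) (ec j s0 a0) j t s)) sums GD \<theta> j s0 a0"
proof -
  have "summable (\<lambda>t. \<gamma> ^ t * (\<Sum>s\<in>jS. mu s * Uf (pf \<theta> (\<lambda>l s a. 0) 0) (ec j s0 a0) j t s))"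
  proof (rule summable_comparison_test[OF _ summable_geom1[of "CU (ec j s0 a0)"]])
    have "norm (\<gamma> ^ t * (\<Sum>s\<in>jS. mu s * Uf (pf \<theta> (\<lambda>l s a. 0) 0) (ec j s0 a0) j t s))
       \<le> \<gamma> ^ t * ((real t + 1) * CU (ec j s0 a0))" for t
      using F'_bound[OF pol_pf] gamma by (simp add: abs_mult mult_left_mono)
    then show "\<exists>N. \<forall>n\<ge>N. norm (\<gamma> ^ n * (\<Sum>s\<in>jS. mu s * Uf (pf \<theta> (\<lambda>l s a. 0) 0) (ec j s0 a0) j n s))
       \<le> \<gamma> ^ n * ((real n + 1) * CU (ec j s0 a0))" by blast
  qed
  moreover have "pf \<theta> (\<lambda>l s a. 0) 0 = softmax S A \<theta>" by (simp add: pf_def)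
  ultimately show ?thesis unfolding GD_def by (simp add: summable_sums)
qed


lemma ls_lin: "finite I \<Longrightarrow> ls \<xi> (\<lambda>l s a. \<Sum>p\<in>I. w p * u p l s a) l sl b = (\<Sum>p\<in>I. w p * ls \<xi> (u p) l sl b)"
proof -
  assume I: "finite I"
  have "(\<Sum>c\<in>A l. \<xi> l sl c * (\<Sum>p\<in>I. w p * u p l sl c)) = (\<Sum>p\<in>I. w p * (\<Sum>c\<in>A l. \<xi> l sl c * u p l sl c))"
    by (simp add: sum_distrib_left algebra_simps sum.swap[of _ "A l"])
  then show ?thesis by (simp add: ls_def right_diff_distrib sum_subtractf)
qed

lemma sc_lin: "finite I \<Longrightarrow> sc \<xi> (\<lambda>l s a. \<Sum>p\<in>I. w p * u p l s a) s a = (\<Sum>p\<in>I. w p * sc \<xi> (u p) s a)"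
  unfolding sc_def by (simp add: ls_lin sum_distrib_left sum.swap[of _ UNIV])

lemma KV_lin: "KV s a (\<lambda>s'. \<Sum>p\<in>I. w p * f p s') = (\<Sum>p\<in>I. w p * KV s a (f p))"
  unfolding KV_def by (simp add: sum_distrib_left algebra_simps sum.swap[of _ jS])

lemma Uf_lin: "finite I \<Longrightarrow> Uf \<xi> (\<lambda>l s a. \<Sum>p\<in>I. w p * u p l s a) j t s = (\<Sum>p\<in>I. w p * Uf \<xi> (u p) j t s)"
proof (induction t arbitrary: s)
  case 0
  then show ?case
    by (simp add: sc_lin sum_distrib_left sum_distrib_right algebra_simps sum.swap[of _ jA])
next
  case (Suc t)
  have kv: "KV s a (Uf \<xi> (\<lambda>l s a. \<Sum>p\<in>I. w p * u p l s a) j t) = (\<Sum>p\<in>I. w p * KV s a (Uf \<xi> (u p) j t))" for a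
  proof -
    have "Uf \<xi> (\<lambda>l s a. \<Sum>p\<in>I. w p * u p l s a) j t = (\<lambda>s. \<Sum>p\<in>I. w p * Uf \<xi> (u p) j t s)"
      using Suc by (simp add: fun_eq_iff)
    then show ?thesis by (simp add: KV_lin)
  qed
  show ?case
    using Suc by (simp add: sc_lin kv sum_distrib_left sum_distrib_right algebra_simps sum.distrib sum.swap[of _ jA])
qed

lemma sum_sq_Nl: "(Nl u l)\<^sup>2 = (\<Sum>s\<in>S l. \<Sum>b\<in>A l. (u l s b)\<^sup>2)"
  unfolding Nl_def by (rule real_sqrt_pow2) (auto intro!: sum_nonneg)

lemma block_norm_Nl: "block_norm S A B u = sqrt (\<Sum>j\<in>B. (Nl u j)\<^sup>2)"
  unfolding block_norm_def by (simp add: sum_sq_Nl)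

lemma sum_Nl_le: "finite B \<Longrightarrow> (\<Sum>j\<in>B. Nl u j) \<le> sqrt (card B) * block_norm S A B u"
proof -
  assume fB: "finite B"
  have "(\<Sum>j\<in>B. 1 * Nl u j)\<^sup>2 \<le> (\<Sum>j\<in>B. 1\<^sup>2) * (\<Sum>j\<in>B. (Nl u j)\<^sup>2)"
    by (rule Cauchy_Schwarz_ineq_sum)
  then have "(\<Sum>j\<in>B. Nl u j)\<^sup>2 \<le> card B * (\<Sum>j\<in>B. (Nl u j)\<^sup>2)" by simp
  then have "sqrt ((\<Sum>j\<in>B. Nl u j)\<^sup>2) \<le> sqrt (card B * (\<Sum>j\<in>B. (Nl u j)\<^sup>2))"
    by (rule real_sqrt_le_mono)
  moreover have "0 \<le> (\<Sum>j\<in>B. Nl u j)" by (auto intro!: sum_nonneg Nl_nonneg)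
  ultimately show ?thesis by (simp add: block_norm_Nl real_sqrt_mult)
qed

lemma Nl_le_block: "finite B \<Longrightarrow> j \<in> B \<Longrightarrow> Nl u j \<le> block_norm S A B u"
proof -
  assume "finite B" "j \<in> B"
  then have "(Nl u j)\<^sup>2 \<le> (\<Sum>j\<in>B. (Nl u j)\<^sup>2)" by (intro member_le_sum) auto
  then have "sqrt ((Nl u j)\<^sup>2) \<le> sqrt (\<Sum>j\<in>B. (Nl u j)\<^sup>2)" by (rule real_sqrt_le_mono)
  then show ?thesis by (simp add: block_norm_Nl Nl_nonneg)
qed

definition vd :: "('n \<Rightarrow> 's \<Rightarrow> 'a \<Rightarrow> real) \<Rightarrow> 'n \<Rightarrow> ('n \<Rightarrow> 's \<Rightarrow> 'a \<Rightarrow> real)" where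
  "vd v j = (\<lambda>l s a. if l = j \<and> s \<in> S j \<and> a \<in> A j then v j s a else 0)"

lemma vd_as_sum: "vd v j = (\<lambda>l s a. \<Sum>p\<in>S j \<times> A j. v j (fst p) (snd p) * ec j (fst p) (snd p) l s a)"
proof (intro ext)
  fix l s a
  have "(\<Sum>p\<in>S j \<times> A j. v j (fst p) (snd p) * ec j (fst p) (snd p) l s a)
      = (\<Sum>p\<in>S j \<times> A j. if p = (s, a) \<and> l = j then v j s a else 0)"
    by (intro sum.cong) (auto simp: ec_def)
  also have "\<dots> = vd v j l s a"
    by (cases "l = j \<and> s \<in> S j \<and> a \<in> A j") (auto simp: vd_def intro!: sum.neutral)
  finally show "vd v j l s a = (\<Sum>p\<in>S j \<times> A j. v j (fst p) (snd p) * ec j (fst p) (snd p) l s a)" ..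
qed

lemma Uf_vd: "Uf \<xi> (vd v j) j' t s = (\<Sum>s0\<in>S j. \<Sum>a0\<in>A j. v j s0 a0 * Uf \<xi> (ec j s0 a0) j' t s)"
  unfolding vd_as_sum by (subst Uf_lin) (auto simp: sum.cartesian_product split_def)

lemma Nl_vd: "Nl (vd v j) l = (if l = j then Nl v j else 0)"
  unfolding Nl_def vd_def by (auto intro!: arg_cong[where f = sqrt] sum.cong)

definition restr :: "'n set \<Rightarrow> ('n \<Rightarrow> 's \<Rightarrow> 'a \<Rightarrow> real) \<Rightarrow> ('n \<Rightarrow> 's \<Rightarrow> 'a \<Rightarrow> real)" where
  "restr B u = (\<lambda>l s a. if l \<in> B then u l s a else 0)"

lemma Nl_restr: "Nl (restr B u) l = (if l \<in> B then Nl u l else 0)"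
  unfolding Nl_def restr_def by auto


lemma sum_UNIV_if: "(\<Sum>l\<in>(UNIV::'n set). if l \<in> B then f l else (0::real)) = (\<Sum>l\<in>B. f l)"
  by (simp add: sum.If_cases)

lemma sum_UNIV_delta: "(\<Sum>l\<in>(UNIV::'n set). if l = j then f l else (0::real)) = f j"
  by simp

lemma Hh_bound:
  fixes B :: "'n set" and v \<theta> \<theta>' :: "'n \<Rightarrow> 's \<Rightarrow> 'a \<Rightarrow> real" and t :: nat
  assumes m1: "1 \<le> card B"
  defines "D \<equiv> restr B (\<lambda>l s a. \<theta> l s a - \<theta>' l s a)"
  defines "Hh \<equiv> (\<lambda>\<xi>. \<Sum>j\<in>B. \<Sum>s\<in>jS. mu s * Uf \<xi> (vd v j) j t s)"
  shows "Hh (pf \<theta>' D 1) - Hh (pf \<theta>' D 0) \<le>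
     2 * card B * (real (Suc t) * real (Suc (Suc t))) * block_norm S A B (\<lambda>l s a. \<theta> l s a - \<theta>' l s a)
       * block_norm S A B v"
proof -
  define m where "m = real (card B)"
  define ND where "ND = block_norm S A B (\<lambda>l s a. \<theta> l s a - \<theta>' l s a)"
  define NV where "NV = block_norm S A B v"
  define T where "T = real t + 1"
  have fB: "finite B" using m1 by (metis card.infinite not_one_le_zero)
  have m1': "1 \<le> m" using m1 by (simp add: m_def)
  have NDn: "0 \<le> ND" and NVn: "0 \<le> NV" unfolding ND_def NV_def block_norm_def by (auto intro!: sum_nonneg)
  have Tn: "0 \<le> T" unfolding T_def by simp
  define f' where "f' = (\<lambda>x. \<Sum>j\<in>B. \<Sum>s\<in>jS. mu s * U2 (pf \<theta>' D x) D (vd v j) j t s)"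
  have der: "((\<lambda>x. Hh (pf \<theta>' D x)) has_real_derivative f' x) (at x)" for x
    unfolding Hh_def f'_def by (intro DERIV_sum DERIV_cmult Uf_deriv) auto
  obtain z where "Hh (pf \<theta>' D 1) - Hh (pf \<theta>' D 0) = (1 - 0) * f' z"
    using MVT2[of 0 1 "\<lambda>x. Hh (pf \<theta>' D x)" f'] der by auto
  then have eqz: "Hh (pf \<theta>' D 1) - Hh (pf \<theta>' D 0) = f' z" by simp
  define SD where "SD = (\<Sum>l\<in>B. Nl (\<lambda>l s a. \<theta> l s a - \<theta>' l s a) l)"
  have CUD: "CU D = sqrt 2 * SD"
    unfolding CU_def SD_def D_def Nl_restr sum_UNIV_if ..
  have CUv: "CU (vd v j) = sqrt 2 * Nl v j" for j
    unfolding CU_def Nl_vd by simp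
  have CDj: "sqrt 2 * (\<Sum>l\<in>UNIV. Nl D l * Nl (vd v j) l) = sqrt 2 * (Nl (\<lambda>l s a. \<theta> l s a - \<theta>' l s a) j * Nl v j)"
    if "j \<in> B" for j
  proof -
    have "(\<Sum>l\<in>UNIV. Nl D l * Nl (vd v j) l)
        = (\<Sum>l\<in>UNIV. if l = j then Nl (\<lambda>l s a. \<theta> l s a - \<theta>' l s a) j * Nl v j else 0)"
      by (rule sum.cong) (auto simp: D_def Nl_restr Nl_vd that)
    then show ?thesis by simp
  qed
  have SDb: "SD \<le> sqrt m * ND" unfolding SD_def m_def ND_def by (rule sum_Nl_le[OF fB])
  have SDn: "0 \<le> SD" unfolding SD_def by (auto intro!: sum_nonneg Nl_nonneg)
  have hterm: "\<bar>\<Sum>s\<in>jS. mu s * U2 (pf \<theta>' D z) D (vd v j) j t s\<bar>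
      \<le> T\<^sup>2 * (CU D * CU (vd v j)) + T * (sqrt 2 * (\<Sum>l\<in>UNIV. Nl D l * Nl (vd v j) l))" for j
    unfolding T_def
    by (intro mu_avg ballI U2_bound pol_pf CU_nonneg)
       (auto simp: CU_def sc_bound[OF pol_pf] dsc_bound[OF pol_pf] intro!: mult_nonneg_nonneg sum_nonneg Nl_nonneg)
  have "\<bar>f' z\<bar> \<le> (\<Sum>j\<in>B. \<bar>\<Sum>s\<in>jS. mu s * U2 (pf \<theta>' D z) D (vd v j) j t s\<bar>)"
    unfolding f'_def by (rule sum_abs)
  also have "\<dots> \<le> (\<Sum>j\<in>B. (T\<^sup>2 * 2 * sqrt m * ND + T * sqrt 2 * ND) * Nl v j)"
  proof (intro sum_mono)
    fix j assume j: "j \<in> B"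
    have a: "Nl (\<lambda>l s a. \<theta> l s a - \<theta>' l s a) j \<le> ND" unfolding ND_def by (rule Nl_le_block[OF fB j])
    have "T\<^sup>2 * (CU D * CU (vd v j)) = T\<^sup>2 * 2 * SD * Nl v j"
      unfolding CUD CUv by simp
    also have "\<dots> \<le> T\<^sup>2 * 2 * (sqrt m * ND) * Nl v j"
      using SDb Tn by (intro mult_right_mono mult_left_mono Nl_nonneg) auto
    finally have b1: "T\<^sup>2 * (CU D * CU (vd v j)) \<le> T\<^sup>2 * 2 * sqrt m * ND * Nl v j" by (simp add: mult.assoc)
    have "T * (sqrt 2 * (\<Sum>l\<in>UNIV. Nl D l * Nl (vd v j) l))
        = T * sqrt 2 * Nl (\<lambda>l s a. \<theta> l s a - \<theta>' l s a) j * Nl v j"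
      using CDj[OF j] by (simp add: mult.assoc)
    also have "\<dots> \<le> T * sqrt 2 * ND * Nl v j"
      using a Tn by (intro mult_right_mono mult_left_mono Nl_nonneg) auto
    finally have b2: "T * (sqrt 2 * (\<Sum>l\<in>UNIV. Nl D l * Nl (vd v j) l)) \<le> T * sqrt 2 * ND * Nl v j" .
    show "\<bar>\<Sum>s\<in>jS. mu s * U2 (pf \<theta>' D z) D (vd v j) j t s\<bar> \<le> (T\<^sup>2 * 2 * sqrt m * ND + T * sqrt 2 * ND) * Nl v j"
      using hterm[of j] b1 b2 by (simp add: algebra_simps)
  qed
  also have "\<dots> = (T\<^sup>2 * 2 * sqrt m * ND + T * sqrt 2 * ND) * (\<Sum>j\<in>B. Nl v j)"
    by (simp add: sum_distrib_left)
  also have "\<dots> \<le> (T\<^sup>2 * 2 * sqrt m * ND + T * sqrt 2 * ND) * (sqrt m * NV)"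
    using sum_Nl_le[OF fB, of v] NDn Tn
    by (intro mult_left_mono) (auto simp: m_def NV_def intro!: add_nonneg_nonneg mult_nonneg_nonneg)
  also have "\<dots> = ND * NV * (2 * T\<^sup>2 * (sqrt m * sqrt m) + T * (sqrt 2 * sqrt m))"
    by (simp add: algebra_simps)
  also have "\<dots> \<le> ND * NV * (2 * T\<^sup>2 * m + T * (2 * m))"
  proof -
    have "sqrt m * sqrt m = m" using m1' by simp
    moreover have "sqrt 2 * sqrt m \<le> 2 * m"
    proof -
      have "2 * m \<le> (2 * m)\<^sup>2" using m1' by (simp add: power2_eq_square)
      then have "sqrt (2 * m) \<le> sqrt ((2 * m)\<^sup>2)" by (rule real_sqrt_le_mono)
      then show ?thesis using m1' by (simp add: real_sqrt_mult)
    qed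
    ultimately show ?thesis using NDn NVn Tn
      by (intro mult_left_mono add_mono) (auto intro!: mult_left_mono)
  qed
  also have "\<dots> = 2 * m * (real (Suc t) * real (Suc (Suc t))) * ND * NV"
    by (simp add: T_def power2_eq_square algebra_simps)
  finally show ?thesis using eqz unfolding m_def ND_def NV_def by linarith
qed


lemma Hh_expand: "(\<Sum>s\<in>jS. mu s * Uf \<xi> (vd v j) j t s)
   = (\<Sum>s0\<in>S j. \<Sum>a0\<in>A j. v j s0 a0 * (\<Sum>s\<in>jS. mu s * Uf \<xi> (ec j s0 a0) j t s))"
proof -
  have "(\<Sum>s\<in>jS. mu s * Uf \<xi> (vd v j) j t s)
      = (\<Sum>s\<in>jS. \<Sum>s0\<in>S j. \<Sum>a0\<in>A j. v j s0 a0 * (mu s * Uf \<xi> (ec j s0 a0) j t s))"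
    by (simp add: Uf_vd sum_distrib_left mult.left_commute)
  also have "\<dots> = (\<Sum>s0\<in>S j. \<Sum>s\<in>jS. \<Sum>a0\<in>A j. v j s0 a0 * (mu s * Uf \<xi> (ec j s0 a0) j t s))"
    by (rule sum.swap)
  also have "\<dots> = (\<Sum>s0\<in>S j. \<Sum>a0\<in>A j. \<Sum>s\<in>jS. v j s0 a0 * (mu s * Uf \<xi> (ec j s0 a0) j t s))"
    by (intro sum.cong refl sum.swap)
  also have "\<dots> = (\<Sum>s0\<in>S j. \<Sum>a0\<in>A j. v j s0 a0 * (\<Sum>s\<in>jS. mu s * Uf \<xi> (ec j s0 a0) j t s))"
    by (simp add: sum_distrib_left)
  finally show ?thesis .
qed

end

locale game2 = game S A P mu \<gamma> r
  for S :: "'n::finite \<Rightarrow> 's::finite set"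
    and A :: "'n \<Rightarrow> 'a::finite set"
    and P :: "'n \<Rightarrow> ('n \<Rightarrow> 's) \<Rightarrow> 'a \<Rightarrow> 's \<Rightarrow> real"
    and mu :: "('n \<Rightarrow> 's) \<Rightarrow> real"
    and \<gamma> :: real
    and r :: "'n \<Rightarrow> ('n \<Rightarrow> 's) \<Rightarrow> ('n \<Rightarrow> 'a) \<Rightarrow> real" +
  fixes E :: "'n \<Rightarrow> 'n \<Rightarrow> bool" and \<kappa>G :: nat and \<Phi> :: "'n \<Rightarrow> ('n \<Rightarrow> 's \<Rightarrow> 'a \<Rightarrow> real) \<Rightarrow> real"
    and i :: 'n
  assumes nmpg: "is_NMPG E \<kappa>G S A (Jval S A P mu \<gamma> r) \<Phi>"
begin

lemma PD:
  assumes j: "j \<in> nbhd E \<kappa>G i"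
  shows "(coord_fun (\<lambda>\<eta>. \<Phi> i (softmax S A \<eta>)) \<theta> j s0 a0 has_real_derivative GD \<theta> j s0 a0) (at (\<theta> j s0 a0))"
proof -
  define \<theta>0 where "\<theta>0 = \<theta>(j := (\<theta> j)(s0 := (\<theta> j s0)(a0 := 0)))"
  define e where "e = ec j s0 a0"
  have line: "\<theta>(j := (\<theta> j)(s0 := (\<theta> j s0)(a0 := x))) = (\<lambda>l s a. \<theta>0 l s a + x * e l s a)" for x
    unfolding \<theta>0_def e_def ec_def by (auto simp: fun_eq_iff)
  have cf: "coord_fun (\<lambda>\<eta>. \<Phi> i (softmax S A \<eta>)) \<theta> j s0 a0 = (\<lambda>x. \<Phi> i (pf \<theta>0 e x))"
    unfolding coord_fun_def pf_def line ..
  have upd: "(pf \<theta>0 e 0)(j := pf \<theta>0 e x j) = pf \<theta>0 e x" for x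
  proof (rule ext)
    fix l show "((pf \<theta>0 e 0)(j := pf \<theta>0 e x j)) l = pf \<theta>0 e x l"
    proof (cases "l = j")
      case False
      then have el: "e l s a = 0" for s a by (simp add: e_def ec_def)
      have "pf \<theta>0 e 0 l = pf \<theta>0 e x l"
        unfolding pf_def by (rule softmax_agent) (simp add: el)
      then show ?thesis using False by simp
    qed simp
  qed
  have lp: "local_policy (S j) (A j) (pf \<theta>0 e x j)" for x
    using softmax_policies unfolding pf_def policies_def by auto
  have eq: "\<Phi> i (pf \<theta>0 e x) = Jval S A P mu \<gamma> r j (pf \<theta>0 e x)
      + (\<Phi> i (pf \<theta>0 e 0) - Jval S A P mu \<gamma> r j (pf \<theta>0 e 0))" for x
  proof -
    have "pf \<theta>0 e 0 \<in> policies S A" unfolding pf_def by (rule softmax_policies)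
    then have "Jval S A P mu \<gamma> r j ((pf \<theta>0 e 0)(j := pf \<theta>0 e x j)) - Jval S A P mu \<gamma> r j (pf \<theta>0 e 0)
        = \<Phi> i ((pf \<theta>0 e 0)(j := pf \<theta>0 e x j)) - \<Phi> i (pf \<theta>0 e 0)"
      using nmpg j lp[of x] unfolding is_NMPG_def by blast
    then show ?thesis unfolding upd by linarith
  qed
  have d0: "((\<lambda>x. Jval S A P mu \<gamma> r j (pf \<theta>0 e x) + (\<Phi> i (pf \<theta>0 e 0) - Jval S A P mu \<gamma> r j (pf \<theta>0 e 0)))
     has_real_derivative (\<Sum>t. \<gamma> ^ t * (\<Sum>s\<in>jS. mu s * Uf (pf \<theta>0 e (\<theta> j s0 a0)) e j t s)) + 0) (at (\<theta> j s0 a0))"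
    by (intro DERIV_add J_deriv DERIV_const)
  have pft: "pf \<theta>0 e (\<theta> j s0 a0) = softmax S A \<theta>"
    unfolding pf_def line[symmetric] by simp
  have fe: "(\<lambda>x. \<Phi> i (pf \<theta>0 e x)) = (\<lambda>x. Jval S A P mu \<gamma> r j (pf \<theta>0 e x)
      + (\<Phi> i (pf \<theta>0 e 0) - Jval S A P mu \<gamma> r j (pf \<theta>0 e 0)))" by (rule ext) (rule eq)
  have "((\<lambda>x. \<Phi> i (pf \<theta>0 e x)) has_real_derivative GD \<theta> j s0 a0) (at (\<theta> j s0 a0))"
    unfolding fe using d0[unfolded pft] unfolding GD_def e_def by simp
  then show ?thesis unfolding cf .
qed

lemma walk_len: "j \<in> nbhd E k i \<Longrightarrow> k \<le> k' \<Longrightarrow> j \<in> nbhd E k' i"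
  unfolding nbhd_def using le_trans by blast

lemma main:
  fixes \<theta> \<theta>' :: "'n \<Rightarrow> 's \<Rightarrow> 'a \<Rightarrow> real" and \<kappa> :: nat
  assumes kappa: "\<kappa> \<le> \<kappa>G"
    and agree: "\<forall>j. j \<notin> nbhd E \<kappa> i \<longrightarrow> (\<forall>s\<in>S j. \<forall>a\<in>A j. \<theta>' j s a = \<theta> j s a)"
  shows "(\<forall>j\<in>nbhd E \<kappa> i. \<forall>s\<in>S j. \<forall>a\<in>A j.
            coord_fun (\<lambda>\<eta>. \<Phi> i (softmax S A \<eta>)) \<theta> j s a differentiable (at (\<theta> j s a)) \<and>
            coord_fun (\<lambda>\<eta>. \<Phi> i (softmax S A \<eta>)) \<theta>' j s a differentiable (at (\<theta>' j s a)))
       \<and> block_norm S A (nbhd E \<kappa> i)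
           (\<lambda>j s a. partial (\<lambda>\<eta>. \<Phi> i (softmax S A \<eta>)) \<theta> j s a
                  - partial (\<lambda>\<eta>. \<Phi> i (softmax S A \<eta>)) \<theta>' j s a)
         \<le> (6 * real (nk E \<kappa>) / (1 - \<gamma>) ^ 3)
             * block_norm S A (nbhd E \<kappa> i) (\<lambda>j s a. \<theta> j s a - \<theta>' j s a)"
proof -
  define B where "B = nbhd E \<kappa> i"
  have fB: "finite B" by simp
  have iB: "i \<in> B" unfolding B_def nbhd_def by (auto intro: exI[of _ "[]"])
  have m1: "1 \<le> card B" using fB iB by (metis One_nat_def Suc_leI card_gt_0_iff empty_iff)
  have mnk: "card B \<le> nk E \<kappa>" unfolding B_def nk_def by (rule Max_ge) auto
  have BG: "j \<in> nbhd E \<kappa>G i" if "j \<in> B" for j using that kappa unfolding B_def by (rule walk_len)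
  let ?F = "\<lambda>\<eta>. \<Phi> i (softmax S A \<eta>)"
  have pd: "partial ?F \<eta> j s a = GD \<eta> j s a" if "j \<in> B" for \<eta> j s a
    unfolding partial_def by (rule DERIV_imp_deriv[OF PD[OF BG[OF that]]])
  have diff: "coord_fun ?F \<eta> j s a differentiable (at (\<eta> j s a))" if "j \<in> B" for \<eta> j s a
    using PD[OF BG[OF that]] real_differentiable_def by blast
  define v where "v = (\<lambda>j s a. GD \<theta> j s a - GD \<theta>' j s a)"
  define ND where "ND = block_norm S A B (\<lambda>j s a. \<theta> j s a - \<theta>' j s a)"
  define NV where "NV = block_norm S A B v"
  have NDn: "0 \<le> ND" and NVn: "0 \<le> NV" unfolding ND_def NV_def block_norm_def by (auto intro!: sum_nonneg)
  have lhs: "block_norm S A B (\<lambda>j s a. partial ?F \<theta> j s a - partial ?F \<theta>' j s a) = NV"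
    unfolding NV_def block_norm_def v_def by (simp add: pd cong: sum.cong)
  define D where "D = restr B (\<lambda>l s a. \<theta> l s a - \<theta>' l s a)"
  have p1: "pf \<theta>' D 1 = softmax S A \<theta>"
    unfolding pf_def by (rule softmax_cong) (use agree in \<open>auto simp: D_def restr_def B_def\<close>)
  have p0: "pf \<theta>' D 0 = softmax S A \<theta>'" unfolding pf_def by simp
  define Hh where "Hh = (\<lambda>\<xi> t. \<Sum>j\<in>B. \<Sum>s\<in>jS. mu s * Uf \<xi> (vd v j) j t s)"
  define g where "g = (\<lambda>\<eta> j s0 a0 t. \<gamma> ^ t * (\<Sum>s\<in>jS. mu s * Uf (softmax S A \<eta>) (ec j s0 a0) j t s))"
  have "(\<lambda>t. \<Sum>j\<in>B. \<Sum>s0\<in>S j. \<Sum>a0\<in>A j. v j s0 a0 * (g \<theta> j s0 a0 t - g \<theta>' j s0 a0 t))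
      sums (\<Sum>j\<in>B. \<Sum>s0\<in>S j. \<Sum>a0\<in>A j. v j s0 a0 * v j s0 a0)"
    unfolding v_def g_def by (intro sums_sum sums_mult sums_diff GD_sums)
  moreover have "(\<Sum>j\<in>B. \<Sum>s0\<in>S j. \<Sum>a0\<in>A j. v j s0 a0 * (g \<theta> j s0 a0 t - g \<theta>' j s0 a0 t))
      = \<gamma> ^ t * (Hh (softmax S A \<theta>) t - Hh (softmax S A \<theta>') t)" for t
    unfolding Hh_def g_def Hh_expand
    by (simp add: sum_distrib_left right_diff_distrib sum_subtractf algebra_simps)
  moreover have "(\<Sum>j\<in>B. \<Sum>s0\<in>S j. \<Sum>a0\<in>A j. v j s0 a0 * v j s0 a0) = NV\<^sup>2"
    unfolding NV_def block_norm_def by (simp add: sum_nonneg power2_eq_square[symmetric])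
  ultimately have sNV: "(\<lambda>t. \<gamma> ^ t * (Hh (softmax S A \<theta>) t - Hh (softmax S A \<theta>') t)) sums NV\<^sup>2" by simp
  have sB: "(\<lambda>t. (real (Suc t) * real (Suc (Suc t))) * \<gamma> ^ t * (2 * card B * ND * NV))
      sums (2 / (1 - \<gamma>)^3 * (2 * card B * ND * NV))"
    by (intro sums_mult2 geom2_sums) (use gamma in auto)
  have le: "\<gamma> ^ t * (Hh (softmax S A \<theta>) t - Hh (softmax S A \<theta>') t)
      \<le> (real (Suc t) * real (Suc (Suc t))) * \<gamma> ^ t * (2 * card B * ND * NV)" for t
  proof -
    have "Hh (softmax S A \<theta>) t - Hh (softmax S A \<theta>') t
        \<le> 2 * card B * (real (Suc t) * real (Suc (Suc t))) * ND * NV"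
      using Hh_bound[OF m1, of \<theta>' \<theta> v t, folded D_def, unfolded p1 p0] unfolding Hh_def ND_def NV_def .
    then have "\<gamma> ^ t * (Hh (softmax S A \<theta>) t - Hh (softmax S A \<theta>') t)
        \<le> \<gamma> ^ t * (2 * card B * (real (Suc t) * real (Suc (Suc t))) * ND * NV)"
      using gamma by (intro mult_left_mono) auto
    then show ?thesis by (simp add: algebra_simps)
  qed
  have NV2: "NV\<^sup>2 \<le> 2 / (1 - \<gamma>)^3 * (2 * card B * ND * NV)"
    by (rule sums_le[OF le sNV sB])
  have g3: "0 < (1 - \<gamma>)^3" using gamma by simp
  have NVb: "NV \<le> 4 * card B / (1 - \<gamma>)^3 * ND"
  proof (cases "NV = 0")
    case True
    then show ?thesis using NDn g3 by simp
  next
    case False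
    then have "0 < NV" using NVn by simp
    moreover have "(4 * card B / (1 - \<gamma>)^3 * ND) * NV = 2 / (1 - \<gamma>)^3 * (2 * card B * ND * NV)"
      by (simp add: field_simps)
    then have "NV * NV \<le> (4 * card B / (1 - \<gamma>)^3 * ND) * NV"
      using NV2 by (simp add: power2_eq_square)
    ultimately show ?thesis by (meson mult_right_le_imp_le)
  qed
  also have "\<dots> \<le> 6 * real (nk E \<kappa>) / (1 - \<gamma>)^3 * ND"
    using mnk NDn g3 by (intro mult_right_mono divide_right_mono) auto
  finally show ?thesis
    using diff lhs unfolding B_def ND_def by auto
qed

end

theorem mainTheorem10:
  fixes E :: "'n::finite \<Rightarrow> 'n \<Rightarrow> bool"
    and S :: "'n \<Rightarrow> 's::finite set"
    and A :: "'n \<Rightarrow> 'a::finite set"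
    and P :: "'n \<Rightarrow> ('n \<Rightarrow> 's) \<Rightarrow> 'a \<Rightarrow> 's \<Rightarrow> real"
    and mu :: "('n \<Rightarrow> 's) \<Rightarrow> real"
    and \<gamma> :: real
    and r :: "'n \<Rightarrow> ('n \<Rightarrow> 's) \<Rightarrow> ('n \<Rightarrow> 'a) \<Rightarrow> real"
    and \<kappa>r \<kappa>G \<kappa> :: nat
    and \<Phi> :: "'n \<Rightarrow> ('n \<Rightarrow> 's \<Rightarrow> 'a \<Rightarrow> real) \<Rightarrow> real"
    and i :: 'n
    and \<theta> \<theta>' :: "'n \<Rightarrow> 's \<Rightarrow> 'a \<Rightarrow> real"
  assumes graph: "undirected_graph E"
    and S_ne: "\<forall>j. S j \<noteq> {}"
    and A_ne: "\<forall>j. A j \<noteq> {}"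
    and P_nonneg: "\<forall>j. \<forall>s\<in>jspace S. \<forall>a\<in>A j. \<forall>s'\<in>S j. 0 \<le> P j s a s'"
    and P_sum: "\<forall>j. \<forall>s\<in>jspace S. \<forall>a\<in>A j. (\<Sum>s'\<in>S j. P j s a s') = 1"
    and P_local: "\<forall>j s t. (\<forall>l\<in>nbhd E 1 j. s l = t l) \<longrightarrow> P j s = P j t"
    and mu_nonneg: "\<forall>s\<in>jspace S. 0 \<le> mu s"
    and mu_sum: "(\<Sum>s\<in>jspace S. mu s) = 1"
    and gamma: "0 < \<gamma>" "\<gamma> < 1"
    and r_range: "\<forall>j. \<forall>s\<in>jspace S. \<forall>a\<in>jspace A. 0 \<le> r j s a \<and> r j s a \<le> 1"
    and r_local: "\<forall>j s a s' a'. (\<forall>l\<in>nbhd E \<kappa>r j. s l = s' l \<and> a l = a' l) \<longrightarrow> r j s a = r j s' a'"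
    and nmpg: "is_NMPG E \<kappa>G S A (Jval S A P mu \<gamma> r) \<Phi>"
    and kappa: "\<kappa> \<le> \<kappa>G"
    and agree: "\<forall>j. j \<notin> nbhd E \<kappa> i \<longrightarrow> (\<forall>s\<in>S j. \<forall>a\<in>A j. \<theta>' j s a = \<theta> j s a)"
  shows "(\<forall>j\<in>nbhd E \<kappa> i. \<forall>s\<in>S j. \<forall>a\<in>A j.
            coord_fun (\<lambda>\<eta>. \<Phi> i (softmax S A \<eta>)) \<theta> j s a differentiable (at (\<theta> j s a)) \<and>
            coord_fun (\<lambda>\<eta>. \<Phi> i (softmax S A \<eta>)) \<theta>' j s a differentiable (at (\<theta>' j s a)))
       \<and> block_norm S A (nbhd E \<kappa> i)
           (\<lambda>j s a. partial (\<lambda>\<eta>. \<Phi> i (softmax S A \<eta>)) \<theta> j s a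
                  - partial (\<lambda>\<eta>. \<Phi> i (softmax S A \<eta>)) \<theta>' j s a)
         \<le> (6 * real (nk E \<kappa>) / (1 - \<gamma>) ^ 3)
             * block_norm S A (nbhd E \<kappa> i) (\<lambda>j s a. \<theta> j s a - \<theta>' j s a)"
proof -
  interpret game2 S A P mu \<gamma> r E \<kappa>G \<Phi> i
    by unfold_locales (use S_ne A_ne P_nonneg P_sum mu_nonneg mu_sum gamma r_range nmpg in auto)
  show ?thesis by (rule main[OF kappa agree])
qed

end
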